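(* The Urysohn space $\mathbb U$ is almost-isometry unique: every metric space almost isometric to $\mathbb U$ is isometric to $\mathbb U$.
   Context: $\mathbb U$ denotes Urysohn's universal separable metric space: the unique (up to isometry) complete separable metric space such that for every finite metric space $F=\{x_0,\dots,x_n\}$, every isometry $\{x_0,\dots,x_{n-1}\}\to\mathbb U$ extends to an isometry $F\to\mathbb U$. For $\lambda>1$, an injection $f$ is $\lambda$-bi-Lipschitz if for all distinct $a,b$ in its domain $d(f(a),f(b))<\lambda d(a,b)$ and $d(a,b)<\lambda d(f(a),f(b))$. Two metric spaces $X,Y$ are almost isometric if for every $\lambda>1$ there is a $\lambda$-bi-Lipschitz bijection from $X$ onto $Y$. *)

theory Defs
  imports "HOL-Analysis.Analysis"
begin

definition isometric_embedding ::
  "('a \<Rightarrow> 'b) \<Rightarrow> 'a set \<Rightarrow> ('a \<Rightarrow> 'a \<Rightarrow> real) \<Rightarrow> 'b set \<Rightarrow> ('b \<Rightarrow> 'b \<Rightarrow> real) \<Rightarrow> bool" where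
  "isometric_embedding f A dA B dB \<longleftrightarrow>
     f ` A \<subseteq> B \<and> (\<forall>a\<in>A. \<forall>b\<in>A. dB (f a) (f b) = dA a b)"

text \<open>Urysohn space: complete separable metric space with the one-point extension property
  for finite metric spaces (finite metric spaces are taken, up to isometry, on finite sets of naturals).\<close>
definition Urysohn_space :: "'a set \<Rightarrow> ('a \<Rightarrow> 'a \<Rightarrow> real) \<Rightarrow> bool" where
  "Urysohn_space U d \<longleftrightarrow>
     Metric_space U d \<and> Metric_space.mcomplete U d \<and>
     separable_space (Metric_space.mtopology U d) \<and>
     (\<forall>(F::nat set) dF x g. finite F \<and> Metric_space F dF \<and> x \<in> F \<and>
        isometric_embedding g (F - {x}) dF U d \<longrightarrow>
        (\<exists>h. isometric_embedding h F dF U d \<and> (\<forall>y\<in>F - {x}. h y = g y)))"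

definition bi_lipschitz ::
  "real \<Rightarrow> ('a \<Rightarrow> 'b) \<Rightarrow> 'a set \<Rightarrow> ('a \<Rightarrow> 'a \<Rightarrow> real) \<Rightarrow> ('b \<Rightarrow> 'b \<Rightarrow> real) \<Rightarrow> bool" where
  "bi_lipschitz L f A dA dB \<longleftrightarrow> inj_on f A \<and>
     (\<forall>a\<in>A. \<forall>b\<in>A. a \<noteq> b \<longrightarrow>
        dB (f a) (f b) < L * dA a b \<and> dA a b < L * dB (f a) (f b))"

definition almost_isometric ::
  "'a set \<Rightarrow> ('a \<Rightarrow> 'a \<Rightarrow> real) \<Rightarrow> 'b set \<Rightarrow> ('b \<Rightarrow> 'b \<Rightarrow> real) \<Rightarrow> bool" where
  "almost_isometric X dX Y dY \<longleftrightarrow>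
     (\<forall>L>1. \<exists>f. bij_betw f X Y \<and> bi_lipschitz L f X dX dY)"

definition isometric ::
  "'a set \<Rightarrow> ('a \<Rightarrow> 'a \<Rightarrow> real) \<Rightarrow> 'b set \<Rightarrow> ('b \<Rightarrow> 'b \<Rightarrow> real) \<Rightarrow> bool" where
  "isometric X dX Y dY \<longleftrightarrow>
     (\<exists>f. bij_betw f X Y \<and> (\<forall>a\<in>X. \<forall>b\<in>X. dY (f a) (f b) = dX a b))"

end

theory Submission
  imports Defs
begin

definition fcomplete :: "'a set \<Rightarrow> ('a \<Rightarrow> 'a \<Rightarrow> real) \<Rightarrow> bool" where
  "fcomplete S d \<longleftrightarrow> (\<forall>\<sigma> C. (\<forall>n. \<sigma> n \<in> S) \<and> (\<forall>n. d (\<sigma> n) (\<sigma> (Suc n)) \<le> C * (1/2)^n) \<longrightarrow>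
      (\<exists>x\<in>S. \<forall>e>0. \<exists>N. \<forall>n\<ge>N. d (\<sigma> n) x < e))"

lemma fast_dist:
  assumes M: "Metric_space S d" and s: "\<forall>n. \<sigma> n \<in> S"
    and c: "\<forall>n. d (\<sigma> n) (\<sigma> (Suc n)) \<le> C * (1/2)^n"
  shows "d (\<sigma> n) (\<sigma> (n+k)) \<le> 2*C*(1/2)^n - 2*C*(1/2)^(n+k)"
proof (induction k)
  case 0
  then show ?case using Metric_space.zero[OF M, of "\<sigma> n" "\<sigma> n"] s by simp
next
  case (Suc k)
  have "d (\<sigma> n) (\<sigma> (n + Suc k)) \<le> d (\<sigma> n) (\<sigma> (n+k)) + d (\<sigma> (n+k)) (\<sigma> (Suc (n+k)))"
    using Metric_space.triangle[OF M] s by simp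
  moreover have "d (\<sigma> (n+k)) (\<sigma> (Suc (n+k))) \<le> C * (1/2)^(n+k)" using c by blast
  moreover have "(1/2::real)^(n + Suc k) = (1/2)^(n+k) / 2" by simp
  ultimately show ?case using Suc by (simp add: algebra_simps)
qed

lemma fast_dist2:
  assumes M: "Metric_space S d" and s: "\<forall>n. \<sigma> n \<in> S"
    and c: "\<forall>n. d (\<sigma> n) (\<sigma> (Suc n)) \<le> C * (1/2)^n" and "N \<le> n"
  shows "d (\<sigma> N) (\<sigma> n) \<le> 2*C*(1/2)^N"
proof -
  have C: "C \<ge> 0" using c Metric_space.nonneg[OF M] by (metis order_trans mult_1_right power_0)
  have "d (\<sigma> N) (\<sigma> (N + (n-N))) \<le> 2*C*(1/2)^N - 2*C*(1/2)^(N+(n-N))"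
    by (rule fast_dist[OF M s c])
  moreover have "0 \<le> 2*C*(1/2::real)^(N+(n-N))" using C by simp
  ultimately show ?thesis using assms(4) by simp
qed

lemma mcomplete_fcomplete:
  assumes M: "Metric_space S d" and mc: "Metric_space.mcomplete S d"
  shows "fcomplete S d"
  unfolding fcomplete_def
proof (intro allI impI)
  fix \<sigma> :: "nat \<Rightarrow> 'a" and C :: real
  assume "(\<forall>n. \<sigma> n \<in> S) \<and> (\<forall>n. d (\<sigma> n) (\<sigma> (Suc n)) \<le> C * (1/2)^n)"
  then have s: "\<forall>n. \<sigma> n \<in> S" and c: "\<forall>n. d (\<sigma> n) (\<sigma> (Suc n)) \<le> C * (1/2)^n" by auto
  have C: "C \<ge> 0" using c Metric_space.nonneg[OF M] by (metis order_trans mult_1_right power_0)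
  have "Metric_space.MCauchy S d \<sigma>"
    unfolding Metric_space.MCauchy_def[OF M]
  proof (intro conjI allI impI)
    show "range \<sigma> \<subseteq> S" using s by auto
    fix e :: real assume e: "e > 0"
    have "e / (4*C+1) > 0" using e C by simp
    then obtain N where N: "(1/2::real)^N < e / (4*C+1)"
      using real_arch_pow_inv[of "e/(4*C+1)" "1/2"] by auto
    then have "(1/2::real)^N * (4*C+1) < e" using C by (simp add: pos_less_divide_eq)
    moreover have "(1/2::real)^N > 0" by simp
    moreover have "(1/2::real)^N * (4*C+1) = 4*C*(1/2)^N + (1/2)^N" by (simp add: algebra_simps)
    ultimately have N2: "4*C*(1/2::real)^N < e" by linarith
    show "\<exists>N. \<forall>n n'. N \<le> n \<longrightarrow> N \<le> n' \<longrightarrow> d (\<sigma> n) (\<sigma> n') < e"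
    proof (intro exI allI impI)
      fix n n' assume "N \<le> n" "N \<le> n'"
      have "d (\<sigma> n) (\<sigma> n') \<le> d (\<sigma> n) (\<sigma> N) + d (\<sigma> N) (\<sigma> n')"
        using Metric_space.triangle[OF M] s by blast
      also have "\<dots> \<le> 2*C*(1/2)^N + 2*C*(1/2)^N"
        using fast_dist2[OF M s c \<open>N \<le> n\<close>] fast_dist2[OF M s c \<open>N \<le> n'\<close>] Metric_space.commute[OF M]
        by (metis add_mono)
      finally show "d (\<sigma> n) (\<sigma> n') < e" using N2 by simp
    qed
  qed
  then obtain x where "limitin (Metric_space.mtopology S d) \<sigma> x sequentially"
    using mc unfolding Metric_space.mcomplete_def[OF M] by blast
  then show "\<exists>x\<in>S. \<forall>e>0. \<exists>N. \<forall>n\<ge>N. d (\<sigma> n) x < e"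
    unfolding Metric_space.limit_metric_sequentially[OF M] by blast
qed

definition kat :: "'a set \<Rightarrow> ('a \<Rightarrow> 'a \<Rightarrow> real) \<Rightarrow> 'a set \<Rightarrow> ('a \<Rightarrow> real) \<Rightarrow> bool" where
  "kat S d A r \<longleftrightarrow> finite A \<and> A \<subseteq> S \<and> (\<forall>a\<in>A. 0 < r a) \<and>
     (\<forall>a\<in>A. \<forall>b\<in>A. r a \<le> r b + d a b \<and> d a b \<le> r a + r b)"

definition KE :: "'a set \<Rightarrow> ('a \<Rightarrow> 'a \<Rightarrow> real) \<Rightarrow> bool" where
  "KE S d \<longleftrightarrow> (\<forall>A r. kat S d A r \<longrightarrow> (\<exists>y\<in>S. \<forall>a\<in>A. d y a = r a))"

lemma urysohn_KE:
  assumes U: "Urysohn_space U d"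
  shows "KE U d"
  unfolding KE_def
proof (intro allI impI)
  fix A r assume k: "kat U d A r"
  have M: "Metric_space U d" using U unfolding Urysohn_space_def by blast
  have fA: "finite A" and AU: "A \<subseteq> U" and rpos: "\<forall>a\<in>A. 0 < r a"
    and rk: "\<forall>a\<in>A. \<forall>b\<in>A. r a \<le> r b + d a b \<and> d a b \<le> r a + r b"
    using k unfolding kat_def by auto
  define n where "n = card A"
  obtain e where e: "bij_betw e {0..<n} A" using ex_bij_betw_nat_finite[OF fA] n_def by blast
  have eA: "\<And>i. i < n \<Longrightarrow> e i \<in> A" using e by (auto simp: bij_betw_def)
  have einj: "\<And>i j. i < n \<Longrightarrow> j < n \<Longrightarrow> e i = e j \<Longrightarrow> i = j"
    using e by (auto simp: bij_betw_def inj_on_def)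
  have eU: "\<And>i. i < n \<Longrightarrow> e i \<in> U" using eA AU by blast
  define dF where "dF i j = (if i = n \<and> j = n then 0 else if i = n then \<bar>r (e j)\<bar>
      else if j = n then \<bar>r (e i)\<bar> else d (e i) (e j))" for i j
  have K0: "\<And>i. i < n \<Longrightarrow> \<bar>r (e i)\<bar> = r (e i) \<and> r (e i) > 0" using rpos eA by force
  have K1: "\<And>i j. i < n \<Longrightarrow> j < n \<Longrightarrow> r (e i) \<le> r (e j) + d (e i) (e j) \<and> d (e i) (e j) \<le> r (e i) + r (e j)"
    using rk eA by blast
  have T: "\<And>i j k. i < n \<Longrightarrow> j < n \<Longrightarrow> k < n \<Longrightarrow> d (e i) (e k) \<le> d (e i) (e j) + d (e j) (e k)"
    using Metric_space.triangle[OF M] eU by blast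
  have Cm: "\<And>x y. d x y = d y x" using Metric_space.commute[OF M] by blast
  have Z: "\<And>i j. i < n \<Longrightarrow> j < n \<Longrightarrow> d (e i) (e j) = 0 \<longleftrightarrow> i = j"
    using Metric_space.zero[OF M] eU einj by metis
  have MF: "Metric_space {..n} dF"
  proof
    fix x y show "0 \<le> dF x y" by (auto simp: dF_def Metric_space.nonneg[OF M])
    show "dF x y = dF y x" by (auto simp: dF_def Cm)
  next
    fix x y assume "x \<in> {..n}" "y \<in> {..n}"
    then have "x = n \<or> x < n" "y = n \<or> y < n" by auto
    then show "dF x y = 0 \<longleftrightarrow> x = y" using Z by (auto simp: dF_def; metis K0 less_irrefl)
  next
    fix x y z assume "x \<in> {..n}" "y \<in> {..n}" "z \<in> {..n}"
    then have "x = n \<or> x < n" "y = n \<or> y < n" "z = n \<or> z < n" by auto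
    then show "dF x z \<le> dF x y + dF y z"
      apply (elim disjE)
      apply (auto simp: dF_def K0 Z dest: K1 T intro: add_increasing add_increasing2 less_imp_le)
      apply (metis K1 Cm)
      done
  qed
  have sub: "{..n} - {n} = {0..<n}" by auto
  have emb: "isometric_embedding e ({..n} - {n}) dF U d"
    unfolding isometric_embedding_def sub using eU by (auto simp: dF_def)
  obtain h where h: "isometric_embedding h {..n} dF U d" "\<forall>y\<in>{..n} - {n}. h y = e y"
    using U unfolding Urysohn_space_def using MF emb by (metis atMost_iff finite_atMost order_refl)
  show "\<exists>y\<in>U. \<forall>a\<in>A. d y a = r a"
  proof (intro bexI ballI)
    show "h n \<in> U" using h(1) unfolding isometric_embedding_def by auto
    fix a assume "a \<in> A"
    then obtain j where j: "j < n" "a = e j" using e by (auto simp: bij_betw_def image_iff)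
    have "d (h n) (h j) = dF n j" using h(1) j unfolding isometric_embedding_def by auto
    moreover have "h j = e j" using h(2) j by auto
    ultimately show "d (h n) a = r a" using j K0[of j] by (simp add: dF_def)
  qed
qed

definition piso :: "'a set \<Rightarrow> ('a \<Rightarrow> 'a \<Rightarrow> real) \<Rightarrow> 'b set \<Rightarrow> ('b \<Rightarrow> 'b \<Rightarrow> real) \<Rightarrow> ('a \<times> 'b) set \<Rightarrow> bool" where
  "piso X dX Y dY R \<longleftrightarrow> R \<subseteq> X \<times> Y \<and> (\<forall>p\<in>R. \<forall>q\<in>R. dX (fst p) (fst q) = dY (snd p) (snd q))"

definition dseq :: "'a set \<Rightarrow> ('a \<Rightarrow> 'a \<Rightarrow> real) \<Rightarrow> (nat \<Rightarrow> 'a) \<Rightarrow> bool" where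
  "dseq S d xs \<longleftrightarrow> (\<forall>n. xs n \<in> S) \<and> (\<forall>x\<in>S. \<forall>e>0. \<exists>n. d x (xs n) < e)"

lemma piso_conv: "piso Y dY X dX (converse R) \<longleftrightarrow> piso X dX Y dY R"
  unfolding piso_def
proof (intro iffI conjI ballI; (elim conjE)?)
  fix p q
  assume H: "\<forall>p\<in>R\<inverse>. \<forall>q\<in>R\<inverse>. dY (fst p) (fst q) = dX (snd p) (snd q)" and pq: "p \<in> R" "q \<in> R"
  show "dX (fst p) (fst q) = dY (snd p) (snd q)" using H[rule_format, of "(snd p, fst p)" "(snd q, fst q)"] pq by simp
next
  fix p q
  assume H: "\<forall>p\<in>R. \<forall>q\<in>R. dX (fst p) (fst q) = dY (snd p) (snd q)" and pq: "p \<in> R\<inverse>" "q \<in> R\<inverse>"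
  show "dY (fst p) (fst q) = dX (snd p) (snd q)" using H[rule_format, of "(snd p, fst p)" "(snd q, fst q)"] pq by auto
qed auto

lemma forth:
  assumes MX: "Metric_space X dX" and MY: "Metric_space Y dY" and KY: "KE Y dY"
    and fR: "finite R" and pR: "piso X dX Y dY R" and x: "x \<in> X"
  shows "\<exists>y. piso X dX Y dY (insert (x,y) R)"
proof (cases "x \<in> fst ` R")
  case True
  then obtain y where "(x,y) \<in> R" by force
  then have "insert (x,y) R = R" by blast
  then show ?thesis using pR by metis
next
  case False
  have RXY: "R \<subseteq> X \<times> Y" using pR unfolding piso_def by blast
  have H: "\<forall>p\<in>R. \<forall>q\<in>R. dX (fst p) (fst q) = dY (snd p) (snd q)" using pR unfolding piso_def by blast
  have iso: "dX a a' = dY b b'" if "(a,b) \<in> R" "(a',b') \<in> R" for a b a' b'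
    using H[rule_format, OF that] by simp
  have inX: "a \<in> X" "b \<in> Y" if "(a,b) \<in> R" for a b using that RXY by blast+
  have uniq: "a = a'" if "(a,b) \<in> R" "(a',b) \<in> R" for a a' b
  proof -
    have "dY b b = 0" using Metric_space.zero[OF MY] inX(2)[OF that(1)] by simp
    then have "dX a a' = 0" using iso[OF that] by simp
    then show ?thesis using Metric_space.zero[OF MX] inX(1)[OF that(1)] inX(1)[OF that(2)] by simp
  qed
  define r where "r b = dX x (SOME a. (a,b) \<in> R)" for b
  have rr: "r b = dX x a" if "(a,b) \<in> R" for a b
  proof -
    have "(SOME a. (a,b) \<in> R, b) \<in> R" using someI[of "\<lambda>a. (a,b) \<in> R"] that by blast
    then have "(SOME a. (a,b) \<in> R) = a" using uniq that by blast
    then show ?thesis unfolding r_def by simp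
  qed
  have pos: "0 < r b" if bR: "b \<in> snd ` R" for b
  proof -
    obtain a where ab: "(a,b) \<in> R" using bR by force
    have "a \<noteq> x" using False ab by (metis fst_conv image_eqI)
    then have "dX x a \<noteq> 0" using Metric_space.zero[OF MX] x inX(1)[OF ab] by simp
    then show "0 < r b" using rr[OF ab] Metric_space.nonneg[OF MX, of x a] by linarith
  qed
  have pair: "r b1 \<le> r b2 + dY b1 b2 \<and> dY b1 b2 \<le> r b1 + r b2" if bR: "b1 \<in> snd ` R" "b2 \<in> snd ` R" for b1 b2
  proof -
    obtain a1 a2 where ab: "(a1,b1) \<in> R" "(a2,b2) \<in> R" using bR by force
    have a: "a1 \<in> X" "a2 \<in> X" using inX ab by auto
    have "dX x a1 \<le> dX x a2 + dX a2 a1" "dX a1 a2 \<le> dX a1 x + dX x a2"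
      using Metric_space.triangle[OF MX] a x by blast+
    moreover have "dY b1 b2 = dX a1 a2" using iso[OF ab] by simp
    moreover have "dX a2 a1 = dX a1 a2" "dX a1 x = dX x a1"
      using Metric_space.commute[OF MX] by auto
    ultimately show ?thesis using rr[OF ab(1)] rr[OF ab(2)] by linarith
  qed
  have k: "kat Y dY (snd ` R) r"
    unfolding kat_def using fR RXY pos pair by auto
  obtain y where y: "y \<in> Y" "\<forall>b\<in>snd ` R. dY y b = r b" using KY k unfolding KE_def by blast
  have yb: "dY y b = dX x a" if "(a,b) \<in> R" for a b
  proof -
    have "b \<in> snd ` R" using that by force
    then have "dY y b = r b" using y(2) by blast
    then show ?thesis using rr[OF that] by simp
  qed
  have "piso X dX Y dY (insert (x,y) R)"
    unfolding piso_def
  proof (intro conjI ballI)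
    show "insert (x, y) R \<subseteq> X \<times> Y" using RXY x y by auto
    fix p q assume p: "p \<in> insert (x,y) R" and q: "q \<in> insert (x,y) R"
    show "dX (fst p) (fst q) = dY (snd p) (snd q)"
      using p q
    proof (elim insertE)
      assume "p = (x,y)" "q = (x,y)"
      then show ?thesis using Metric_space.zero[OF MX, of x x] Metric_space.zero[OF MY, of y y] x y by simp
    next
      assume "p = (x,y)" "q \<in> R"
      then show ?thesis using yb[of "fst q" "snd q"] by simp
    next
      assume "p \<in> R" "q = (x,y)"
      then show ?thesis using yb[of "fst p" "snd p"] Metric_space.commute[OF MX] Metric_space.commute[OF MY] by simp
    next
      assume "p \<in> R" "q \<in> R"
      then show ?thesis using H by blast
    qed
  qed
  then show ?thesis by blast
qed

lemma step:
  assumes MX: "Metric_space X dX" and MY: "Metric_space Y dY" and KX: "KE X dX" and KY: "KE Y dY"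
    and fR: "finite R" and pR: "piso X dX Y dY R" and x: "x \<in> X" and y: "y \<in> Y"
  shows "\<exists>R'. R \<subseteq> R' \<and> finite R' \<and> piso X dX Y dY R' \<and> x \<in> fst ` R' \<and> y \<in> snd ` R'"
proof -
  obtain y1 where 1: "piso X dX Y dY (insert (x,y1) R)" using forth[OF MX MY KY fR pR x] by blast
  have "piso Y dY X dX (converse (insert (x,y1) R))" using 1 piso_conv by blast
  moreover have "finite (converse (insert (x,y1) R))" using fR by simp
  ultimately obtain x2 where "piso Y dY X dX (insert (y,x2) (converse (insert (x,y1) R)))"
    using forth[OF MY MX KX _ _ y] by blast
  moreover have "insert (y,x2) (converse (insert (x,y1) R)) = converse (insert (x2,y) (insert (x,y1) R))"
    by auto
  ultimately have "piso X dX Y dY (insert (x2,y) (insert (x,y1) R))" using piso_conv by metis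
  moreover have "x \<in> fst ` (insert (x2,y) (insert (x,y1) R))" "y \<in> snd ` (insert (x2,y) (insert (x,y1) R))"
    by force+
  ultimately show ?thesis using fR by (intro exI[of _ "insert (x2,y) (insert (x,y1) R)"]) auto
qed

lemma total:
  assumes MX: "Metric_space X dX" and MY: "Metric_space Y dY" and cY: "fcomplete Y dY"
    and pR: "piso X dX Y dY R" and dn: "\<forall>x\<in>X. \<forall>e>0. \<exists>p\<in>R. dX x (fst p) < e" and x: "x \<in> X"
  shows "\<exists>y\<in>Y. \<forall>e>0. \<exists>p\<in>R. dX x (fst p) < e \<and> dY y (snd p) < e"
proof -
  have RXY: "R \<subseteq> X \<times> Y" and iso: "\<And>p q. p \<in> R \<Longrightarrow> q \<in> R \<Longrightarrow> dX (fst p) (fst q) = dY (snd p) (snd q)"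
    using pR unfolding piso_def by blast+
  have "\<forall>n. \<exists>p\<in>R. dX x (fst p) < (1/2)^n" using dn x by simp
  then obtain p where p: "\<And>n. p n \<in> R" "\<And>n. dX x (fst (p n)) < (1/2)^n" by metis
  define \<sigma> where "\<sigma> n = snd (p n)" for n
  have pXY: "p n \<in> X \<times> Y" for n using p(1) RXY by blast
  have sY: "\<forall>n. \<sigma> n \<in> Y" using pXY unfolding \<sigma>_def by (simp add: mem_Times_iff)
  have pX: "\<And>n. fst (p n) \<in> X" using pXY by (simp add: mem_Times_iff)
  have "\<forall>n. dY (\<sigma> n) (\<sigma> (Suc n)) \<le> 2 * (1/2)^n"
  proof
    fix n
    have "dY (\<sigma> n) (\<sigma> (Suc n)) = dX (fst (p n)) (fst (p (Suc n)))"
      using iso[OF p(1) p(1)] unfolding \<sigma>_def by simp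
    also have "\<dots> \<le> dX (fst (p n)) x + dX x (fst (p (Suc n)))"
      using Metric_space.triangle[OF MX] pX x by blast
    also have "\<dots> \<le> (1/2)^n + (1/2)^(Suc n)"
      using p(2)[of n] p(2)[of "Suc n"] Metric_space.commute[OF MX] by (metis add_mono less_imp_le)
    also have "\<dots> \<le> 2 * (1/2)^n" by simp
    finally show "dY (\<sigma> n) (\<sigma> (Suc n)) \<le> 2 * (1/2)^n" .
  qed
  then obtain y where y: "y \<in> Y" "\<forall>e>0. \<exists>N. \<forall>n\<ge>N. dY (\<sigma> n) y < e"
    using cY sY unfolding fcomplete_def by blast
  have "\<forall>e>0. \<exists>p\<in>R. dX x (fst p) < e \<and> dY y (snd p) < e"
  proof (intro allI impI)
    fix e :: real assume e: "e > 0"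
    obtain n1 where n1: "(1/2::real)^n1 < e" using real_arch_pow_inv[OF e, of "1/2"] by auto
    obtain N where N: "\<forall>n\<ge>N. dY (\<sigma> n) y < e" using y(2) e by blast
    define n where "n = max n1 N"
    have "(1/2::real)^n \<le> (1/2)^n1" unfolding n_def by (simp add: power_decreasing)
    then have "dX x (fst (p n)) < e" using p(2)[of n] n1 by linarith
    moreover have "dY y (snd (p n)) < e" using N Metric_space.commute[OF MY] unfolding n_def \<sigma>_def
      by (metis max.cobounded2)
    ultimately show "\<exists>p\<in>R. dX x (fst p) < e \<and> dY y (snd p) < e" using p(1) by blast
  qed
  then show ?thesis using y(1) by blast
qed

lemma eps0: fixes t :: real assumes "\<And>e. e > 0 \<Longrightarrow> \<bar>t\<bar> < e" shows "t = 0"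
  using assms[of "\<bar>t\<bar>"] by (cases "t = 0") auto

lemma closure_piso:
  assumes MX: "Metric_space X dX" and MY: "Metric_space Y dY" and pR: "piso X dX Y dY R"
    and xy: "x \<in> X" "y \<in> Y" "\<forall>e>0. \<exists>p\<in>R. dX x (fst p) < e \<and> dY y (snd p) < e"
    and xy': "x' \<in> X" "y' \<in> Y" "\<forall>e>0. \<exists>p\<in>R. dX x' (fst p) < e \<and> dY y' (snd p) < e"
  shows "dX x x' = dY y y'"
proof -
  have RXY: "R \<subseteq> X \<times> Y" and iso: "\<And>p q. p \<in> R \<Longrightarrow> q \<in> R \<Longrightarrow> dX (fst p) (fst q) = dY (snd p) (snd q)"
    using pR unfolding piso_def by blast+
  have "\<bar>dX x x' - dY y y'\<bar> < e" if e: "e > 0" for e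
  proof -
    obtain p where p: "p \<in> R" "dX x (fst p) < e/4" "dY y (snd p) < e/4" using xy(3) e by (meson zero_less_divide_iff zero_less_numeral)
    obtain q where q: "q \<in> R" "dX x' (fst q) < e/4" "dY y' (snd q) < e/4" using xy'(3) e by (meson zero_less_divide_iff zero_less_numeral)
    have m: "fst p \<in> X" "fst q \<in> X" "snd p \<in> Y" "snd q \<in> Y" using p(1) q(1) RXY by force+
    have "dX x x' \<le> dX x (fst p) + dX (fst p) x'" "dX (fst p) x' \<le> dX (fst p) (fst q) + dX (fst q) x'"
      "dX (fst p) (fst q) \<le> dX (fst p) x + dX x (fst q)" "dX x (fst q) \<le> dX x x' + dX x' (fst q)"
      using Metric_space.triangle[OF MX] m xy xy' by blast+
    moreover have "dY y y' \<le> dY y (snd p) + dY (snd p) y'" "dY (snd p) y' \<le> dY (snd p) (snd q) + dY (snd q) y'"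
      "dY (snd p) (snd q) \<le> dY (snd p) y + dY y (snd q)" "dY y (snd q) \<le> dY y y' + dY y' (snd q)"
      using Metric_space.triangle[OF MY] m xy xy' by blast+
    moreover have "dX (fst q) x' = dX x' (fst q)" "dX (fst p) x = dX x (fst p)"
      "dY (snd q) y' = dY y' (snd q)" "dY (snd p) y = dY y (snd p)"
      using Metric_space.commute[OF MX] Metric_space.commute[OF MY] by auto
    moreover have "dX (fst p) (fst q) = dY (snd p) (snd q)" using iso p(1) q(1) by blast
    ultimately show ?thesis using p q by linarith
  qed
  then show ?thesis using eps0[of "dX x x' - dY y y'"] by simp
qed

lemma uniq:
  assumes MX: "Metric_space X dX" and MY: "Metric_space Y dY"
    and cX: "fcomplete X dX" and cY: "fcomplete Y dY"
    and KX: "KE X dX" and KY: "KE Y dY"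
    and xs: "dseq X dX xs" and ys: "dseq Y dY ys"
  shows "isometric X dX Y dY"
proof -
  define P where "P n R R' \<longleftrightarrow> R \<subseteq> R' \<and> finite R' \<and> piso X dX Y dY R' \<and> xs n \<in> fst ` R' \<and> ys n \<in> snd ` R'"
    for n R R'
  define Rs where "Rs = rec_nat {} (\<lambda>n R. SOME R'. P n R R')"
  have Rs0: "Rs 0 = {}" and RsS: "\<And>n. Rs (Suc n) = (SOME R'. P n (Rs n) R')" by (simp_all add: Rs_def)
  have xsX: "\<And>n. xs n \<in> X" and ysY: "\<And>n. ys n \<in> Y" using xs ys unfolding dseq_def by auto
  have ex: "\<exists>R'. P n R R'" if "finite R" "piso X dX Y dY R" for n R
    unfolding P_def using step[OF MX MY KX KY that xsX ysY] .
  have inv: "finite (Rs n) \<and> piso X dX Y dY (Rs n)" for n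
  proof (induction n)
    case 0 then show ?case by (simp add: Rs0 piso_def)
  next
    case (Suc n)
    then have "P n (Rs n) (Rs (Suc n))" unfolding RsS using ex someI_ex by metis
    then show ?case unfolding P_def by blast
  qed
  have PS: "P n (Rs n) (Rs (Suc n))" for n unfolding RsS using ex inv someI_ex by metis
  have mono: "Rs m \<subseteq> Rs n" if "m \<le> n" for m n
    using lift_Suc_mono_le[of Rs, OF _ that] PS unfolding P_def by blast
  define Ri where "Ri = (\<Union>n. Rs n)"
  have pRi: "piso X dX Y dY Ri"
    unfolding piso_def
  proof (intro conjI ballI)
    show "Ri \<subseteq> X \<times> Y" using inv unfolding Ri_def piso_def by blast
    fix p q assume "p \<in> Ri" "q \<in> Ri"
    then obtain m n where "p \<in> Rs m" "q \<in> Rs n" unfolding Ri_def by blast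
    then have "p \<in> Rs (max m n)" "q \<in> Rs (max m n)" using mono by (meson max.cobounded1 max.cobounded2 subsetD)+
    then show "dX (fst p) (fst q) = dY (snd p) (snd q)" using inv unfolding piso_def by blast
  qed
  have dnX: "\<forall>x\<in>X. \<forall>e>0. \<exists>p\<in>Ri. dX x (fst p) < e"
  proof (intro ballI allI impI)
    fix x e assume "x \<in> X" "(e::real) > 0"
    then obtain n where n: "dX x (xs n) < e" using xs unfolding dseq_def by blast
    obtain p where "p \<in> Rs (Suc n)" "fst p = xs n" using PS[of n] unfolding P_def by force
    then show "\<exists>p\<in>Ri. dX x (fst p) < e" using n unfolding Ri_def by force
  qed
  have dnY: "\<forall>y\<in>Y. \<forall>e>0. \<exists>p\<in>converse Ri. dY y (fst p) < e"
  proof (intro ballI allI impI)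
    fix y e assume "y \<in> Y" "(e::real) > 0"
    then obtain n where n: "dY y (ys n) < e" using ys unfolding dseq_def by blast
    obtain p where "p \<in> Rs (Suc n)" "snd p = ys n" using PS[of n] unfolding P_def by force
    then have "(ys n, fst p) \<in> converse Ri" unfolding Ri_def by (metis UN_I UNIV_I converseI prod.collapse)
    then show "\<exists>p\<in>converse Ri. dY y (fst p) < e" using n by (intro bexI) auto
  qed
  define near where "near x y \<longleftrightarrow> x \<in> X \<and> y \<in> Y \<and> (\<forall>e>0. \<exists>p\<in>Ri. dX x (fst p) < e \<and> dY y (snd p) < e)" for x y
  have tot: "\<exists>y. near x y" if "x \<in> X" for x
    using total[OF MX MY cY pRi dnX that] that unfolding near_def by blast
  have sur: "\<exists>x. near x y" if yY: "y \<in> Y" for y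
  proof -
    obtain x where x: "x \<in> X" "\<forall>e>0. \<exists>p\<in>converse Ri. dY y (fst p) < e \<and> dX x (snd p) < e"
      using total[OF MY MX cX iffD2[OF piso_conv pRi] dnY yY] by blast
    have "\<forall>e>0. \<exists>p\<in>Ri. dX x (fst p) < e \<and> dY y (snd p) < e"
    proof (intro allI impI)
      fix e :: real assume "e > 0"
      then obtain p where "p \<in> converse Ri" "dY y (fst p) < e \<and> dX x (snd p) < e" using x(2) by blast
      then show "\<exists>p\<in>Ri. dX x (fst p) < e \<and> dY y (snd p) < e"
        by (intro bexI[of _ "(snd p, fst p)"]) auto
    qed
    then show ?thesis using x(1) yY unfolding near_def by blast
  qed
  have nd: "dX x x' = dY y y'" if "near x y" "near x' y'" for x y x' y'
    using closure_piso[OF MX MY pRi] that unfolding near_def by blast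
  define f where "f x = (SOME y. near x y)" for x
  have fn: "near x (f x)" if "x \<in> X" for x unfolding f_def using tot[OF that] someI_ex by metis
  have fiso: "\<forall>a\<in>X. \<forall>b\<in>X. dY (f a) (f b) = dX a b" using fn nd by metis
  have "bij_betw f X Y"
    unfolding bij_betw_def
  proof (intro conjI)
    show "inj_on f X"
    proof (rule inj_onI)
      fix a b assume ab: "a \<in> X" "b \<in> X" "f a = f b"
      then have "dX a b = 0" using fiso Metric_space.zero[OF MY] fn near_def by metis
      then show "a = b" using Metric_space.zero[OF MX] ab by blast
    qed
    show "f ` X = Y"
    proof
      show "f ` X \<subseteq> Y" using fn unfolding near_def by blast
      show "Y \<subseteq> f ` X"
      proof
        fix y assume y: "y \<in> Y"
        then obtain x where x: "near x y" using sur by blast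
        then have xX: "x \<in> X" unfolding near_def by blast
        have "dY y (f x) = dX x x" using nd[OF x fn[OF xX]] by simp
        then have "dY y (f x) = 0" using Metric_space.zero[OF MX] xX by simp
        then have "y = f x" using Metric_space.zero[OF MY] y fn[OF xX] unfolding near_def by blast
        then show "y \<in> f ` X" using xX by blast
      qed
    qed
  qed
  then show ?thesis unfolding isometric_def using fiso by blast
qed

definition approxE :: "'a set \<Rightarrow> ('a \<Rightarrow> 'a \<Rightarrow> real) \<Rightarrow> bool" where
  "approxE S d \<longleftrightarrow> (\<forall>A r e. kat S d A r \<and> 0 < e \<longrightarrow> (\<exists>y\<in>S. \<forall>a\<in>A. \<bar>d y a - r a\<bar> \<le> e))"

lemma bl_le:
  assumes MX: "Metric_space X dX" and MU: "Metric_space U dU" and fU: "f ` X \<subseteq> U"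
    and bl: "bi_lipschitz L f X dX dU" and a: "a \<in> X" and b: "b \<in> X"
  shows "dU (f a) (f b) \<le> L * dX a b \<and> dX a b \<le> L * dU (f a) (f b)"
proof (cases "a = b")
  case True
  have "f a \<in> U" using a fU by blast
  then have "dU (f a) (f a) = 0" "dX a a = 0" using Metric_space.zero[OF MX, of a a] Metric_space.zero[OF MU, of "f a" "f a"] a by auto
  then show ?thesis using True by simp
next
  case False
  then show ?thesis using bl a b unfolding bi_lipschitz_def by (meson less_imp_le)
qed

lemma X_fcomplete:
  assumes MX: "Metric_space X dX" and MU: "Metric_space U dU" and cU: "fcomplete U dU"
    and bij: "bij_betw f X U" and bl: "bi_lipschitz L f X dX dU" and L: "L > 0"
  shows "fcomplete X dX"
  unfolding fcomplete_def
proof (intro allI impI)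
  fix \<sigma> :: "nat \<Rightarrow> 'a" and C :: real
  assume "(\<forall>n. \<sigma> n \<in> X) \<and> (\<forall>n. dX (\<sigma> n) (\<sigma> (Suc n)) \<le> C * (1/2)^n)"
  then have s: "\<forall>n. \<sigma> n \<in> X" and c: "\<forall>n. dX (\<sigma> n) (\<sigma> (Suc n)) \<le> C * (1/2)^n" by auto
  have fU: "f ` X \<subseteq> U" using bij by (simp add: bij_betw_def)
  have "\<forall>n. dU (f (\<sigma> n)) (f (\<sigma> (Suc n))) \<le> (L*C) * (1/2)^n"
  proof
    fix n
    have "dU (f (\<sigma> n)) (f (\<sigma> (Suc n))) \<le> L * dX (\<sigma> n) (\<sigma> (Suc n))"
      using bl_le[OF MX MU fU bl] s by blast
    also have "\<dots> \<le> L * (C * (1/2)^n)" using c L by (simp add: mult_left_mono)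
    finally show "dU (f (\<sigma> n)) (f (\<sigma> (Suc n))) \<le> (L*C) * (1/2)^n" by simp
  qed
  moreover have "\<forall>n. f (\<sigma> n) \<in> U" using s fU by blast
  ultimately obtain u where u: "u \<in> U" "\<forall>e>0. \<exists>N. \<forall>n\<ge>N. dU (f (\<sigma> n)) u < e"
    using cU unfolding fcomplete_def by (metis comp_apply)
  obtain x where x: "x \<in> X" "f x = u" using bij u(1) by (metis bij_betw_def imageE)
  show "\<exists>x\<in>X. \<forall>e>0. \<exists>N. \<forall>n\<ge>N. dX (\<sigma> n) x < e"
  proof (intro bexI[OF _ x(1)] allI impI)
    fix e :: real assume "e > 0"
    then have "e / L > 0" using L by simp
    then obtain N where N: "\<forall>n\<ge>N. dU (f (\<sigma> n)) u < e / L" using u(2) by blast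
    show "\<exists>N. \<forall>n\<ge>N. dX (\<sigma> n) x < e"
    proof (intro exI allI impI)
      fix n assume "N \<le> n"
      then have "dU (f (\<sigma> n)) (f x) < e / L" using N x by simp
      then have "L * dU (f (\<sigma> n)) (f x) < e" using L by (simp add: pos_less_divide_eq mult.commute)
      moreover have "dX (\<sigma> n) x \<le> L * dU (f (\<sigma> n)) (f x)" using bl_le[OF MX MU fU bl] s x by blast
      ultimately show "dX (\<sigma> n) x < e" by linarith
    qed
  qed
qed

lemma sep_dseq:
  assumes MU: "Metric_space U d" and sep: "separable_space (Metric_space.mtopology U d)" and ne: "u0 \<in> U"
  shows "\<exists>us. dseq U d us"
proof -
  obtain C where C: "countable C" "C \<subseteq> U" "Metric_space.mtopology U d closure_of C = U"
    using sep unfolding separable_space_def Metric_space.topspace_mtopology[OF MU] by blast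
  have cl: "\<forall>x\<in>U. \<forall>r>0. \<exists>y\<in>C. d x y < r"
    using C(3) unfolding Metric_space.metric_closure_of[OF MU] Metric_space.in_mball[OF MU] by blast
  then have "C \<noteq> {}" using ne by (meson empty_iff zero_less_one)
  define us where "us = from_nat_into C"
  have "dseq U d us"
    unfolding dseq_def
  proof (intro conjI allI ballI impI)
    fix n show "us n \<in> U" unfolding us_def using from_nat_into[OF \<open>C \<noteq> {}\<close>] C(2) by blast
  next
    fix x e assume "x \<in> U" "(e::real) > 0"
    then obtain y where "y \<in> C" "d x y < e" using cl by blast
    then show "\<exists>n. d x (us n) < e" unfolding us_def using from_nat_into_surj[OF C(1)] by metis
  qed
  then show ?thesis by blast
qed

lemma X_dseq:
  assumes MX: "Metric_space X dX" and MU: "Metric_space U dU" and us: "dseq U dU us"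
    and bij: "bij_betw f X U" and bl: "bi_lipschitz L f X dX dU" and L: "L > 0"
  shows "dseq X dX (inv_into X f \<circ> us)"
  unfolding dseq_def
proof (intro conjI allI ballI impI)
  have fU: "f ` X \<subseteq> U" using bij by (simp add: bij_betw_def)
  have usU: "\<And>n. us n \<in> f ` X" using us bij unfolding dseq_def bij_betw_def by blast
  fix n show "(inv_into X f \<circ> us) n \<in> X" using usU by (simp add: inv_into_into)
next
  have fU: "f ` X \<subseteq> U" using bij by (simp add: bij_betw_def)
  have usU: "\<And>n. us n \<in> f ` X" using us bij unfolding dseq_def bij_betw_def by blast
  fix x e assume x: "x \<in> X" and e: "(e::real) > 0"
  then obtain n where n: "dU (f x) (us n) < e / L" using us fU L unfolding dseq_def by (meson divide_pos_pos image_subset_iff)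
  define z where "z = inv_into X f (us n)"
  have z: "z \<in> X" "f z = us n" unfolding z_def using usU by (auto simp: inv_into_into f_inv_into_f)
  have "dX x z \<le> L * dU (f x) (f z)" using bl_le[OF MX MU fU bl x z(1)] by blast
  moreover have "L * dU (f x) (f z) < e" using n z L by (simp add: pos_less_divide_eq mult.commute)
  ultimately have "dX x ((inv_into X f \<circ> us) n) < e" unfolding z_def by simp
  then show "\<exists>n. dX x ((inv_into X f \<circ> us) n) < e" by blast
qed

lemma approx_step:
  assumes MX: "Metric_space X dX" and MU: "Metric_space U dU" and KU: "KE U dU"
    and bij: "bij_betw f X U" and bl: "bi_lipschitz L f X dX dU" and L: "L > 1"
    and k: "kat X dX A r" and D: "D \<ge> 0" "\<forall>a\<in>A. \<forall>b\<in>A. dX a b \<le> D"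
    and R: "R \<ge> 0" "\<forall>a\<in>A. r a \<le> R"
  shows "\<exists>y\<in>X. \<forall>b\<in>A. \<bar>dX y b - r b\<bar> \<le> (L^2 - 1) * (D + R)"
proof -
  have fU: "f ` X \<subseteq> U" and inj: "inj_on f X" and fX: "f ` X = U" using bij by (auto simp: bij_betw_def)
  have fA: "finite A" and AX: "A \<subseteq> X" and rpos: "\<forall>a\<in>A. 0 < r a"
    and rk: "\<forall>a\<in>A. \<forall>b\<in>A. r a \<le> r b + dX a b \<and> dX a b \<le> r a + r b"
    using k unfolding kat_def by auto
  define g where "g = inv_into X f"
  have gf: "\<And>a. a \<in> X \<Longrightarrow> g (f a) = a" unfolding g_def using inj by simp
  have L0: "L > 0" using L by simp
  have iL: "1 / L < 1" using L by simp
  define c where "c = (L - 1/L) * D / 2"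
  have Li: "L - 1/L \<ge> 0" using iL L by linarith
  have c0: "c \<ge> 0" unfolding c_def using Li D by simp
  define r' where "r' u = r (g u) / L + c" for u
  have r'f: "r' (f a) = r a / L + c" if "a \<in> X" for a unfolding r'_def using gf[OF that] by simp
  have pos: "0 < r' u" if uA: "u \<in> f ` A" for u
  proof -
    obtain a where a: "a \<in> A" "u = f a" using uA by blast
    have "r a / L > 0" using rpos a L0 by simp
    then show "0 < r' u" using a r'f AX c0 by auto
  qed
  have pair: "r' u1 \<le> r' u2 + dU u1 u2 \<and> dU u1 u2 \<le> r' u1 + r' u2" if uA: "u1 \<in> f ` A" "u2 \<in> f ` A" for u1 u2
  proof -
    obtain b1 b2 where b: "b1 \<in> A" "b2 \<in> A" "u1 = f b1" "u2 = f b2" using uA by blast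
    have bX: "b1 \<in> X" "b2 \<in> X" using b AX by auto
    have le: "dU (f b1) (f b2) \<le> L * dX b1 b2 \<and> dX b1 b2 \<le> L * dU (f b1) (f b2)"
      using bl_le[OF MX MU fU bl bX] .
    have r1: "r b1 \<le> r b2 + dX b1 b2" and r2: "dX b1 b2 \<le> r b1 + r b2" using rk b by auto
    have "r b1 / L \<le> (r b2 + dX b1 b2) / L" using r1 L0 by (simp add: divide_right_mono)
    moreover have "dX b1 b2 / L \<le> dU (f b1) (f b2)" using le L0 by (simp add: pos_divide_le_eq mult.commute)
    moreover have "(r b2 + dX b1 b2) / L = r b2 / L + dX b1 b2 / L" by (simp add: add_divide_distrib)
    ultimately have i1: "r b1 / L + c \<le> r b2 / L + c + dU (f b1) (f b2)" by linarith
    have "dX b1 b2 / L \<le> (r b1 + r b2) / L" using r2 L0 by (simp add: divide_right_mono)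
    moreover have "(L - 1/L) * dX b1 b2 \<le> (L - 1/L) * D" using D b Li by (intro mult_left_mono) auto
    moreover have "dX b1 b2 / L + (L - 1/L) * dX b1 b2 = L * dX b1 b2" using L0 by (simp add: field_simps)
    moreover have "(r b1 + r b2) / L = r b1 / L + r b2 / L" by (simp add: add_divide_distrib)
    ultimately have i2: "dU (f b1) (f b2) \<le> (r b1 / L + c) + (r b2 / L + c)" using le unfolding c_def by linarith
    show ?thesis
      using i1 i2 b r'f bX by simp
  qed
  have k': "kat U dU (f ` A) r'"
    unfolding kat_def using fA AX fU pos pair by auto
  obtain u where u: "u \<in> U" "\<forall>a\<in>f ` A. dU u a = r' a" using KU k' unfolding KE_def by blast
  obtain y where y: "y \<in> X" "f y = u" using u(1) fX by blast
  have "\<bar>dX y b - r b\<bar> \<le> (L^2 - 1) * (D + R)" if b: "b \<in> A" for b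
  proof -
    have bX: "b \<in> X" using b AX by auto
    have du: "dU (f y) (f b) = r b / L + c" using u(2) y(2) r'f[OF bX] b by auto
    have rb: "0 < r b" "r b \<le> R" using rpos R b by auto
    have "y \<noteq> b"
    proof
      assume "y = b"
      then have "dU (f y) (f b) = 0" using Metric_space.zero[OF MU] y u by simp
      moreover have "r b / L > 0" using rb L0 by simp
      ultimately show False using du c0 by linarith
    qed
    then have s1: "dU (f y) (f b) < L * dX y b" and s2: "dX y b < L * dU (f y) (f b)"
      using bl y(1) bX unfolding bi_lipschitz_def by auto
    have L2: "L^2 \<ge> 1" using L by (simp add: one_le_power less_imp_le)
    have "L * dU (f y) (f b) = r b + L * c" using du L0 by (simp add: field_simps)
    moreover have "L * c = (L^2 - 1) * D / 2" unfolding c_def using L0 by (simp add: field_simps power2_eq_square)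
    moreover have "(L^2 - 1) * D / 2 \<le> (L^2 - 1) * (D + R)"
    proof -
      have "(L^2 - 1) * D \<le> (L^2 - 1) * (D + R)" using L2 R by (intro mult_left_mono) auto
      moreover have "0 \<le> (L^2 - 1) * D" using L2 D by simp
      ultimately show ?thesis by linarith
    qed
    ultimately have up: "dX y b - r b \<le> (L^2 - 1) * (D + R)" using s2 by linarith
    have "r b / L < L * dX y b" using s1 du c0 by linarith
    then have "r b < L^2 * dX y b" using L0 by (simp add: divide_less_eq power2_eq_square mult.assoc mult.commute)
    then have "r b / L^2 < dX y b" using L0 by (simp add: divide_less_eq mult.commute)
    moreover have "r b - r b / L^2 \<le> (L^2 - 1) * R"
    proof -
      have "r b - r b / L^2 = r b * (L^2 - 1) / L^2" using L0 by (simp add: field_simps)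
      also have "\<dots> \<le> r b * (L^2 - 1)"
      proof -
        have t0: "0 \<le> r b * (L^2 - 1)" using L2 rb by simp
        have "r b * (L^2 - 1) * 1 \<le> r b * (L^2 - 1) * L^2" using t0 L2 by (intro mult_left_mono) auto
        moreover have "L^2 > 0" using L0 by simp
        ultimately show ?thesis by (simp add: pos_divide_le_eq)
      qed
      also have "\<dots> \<le> R * (L^2 - 1)" using rb L2 by (simp add: mult_right_mono)
      finally show ?thesis by (simp add: mult.commute)
    qed
    moreover have "(L^2 - 1) * R \<le> (L^2 - 1) * (D + R)" using L2 D by (simp add: mult_left_mono)
    ultimately have lo: "r b - dX y b \<le> (L^2 - 1) * (D + R)" by linarith
    show ?thesis using up lo by linarith
  qed
  then show ?thesis using y(1) by blast
qed

lemma X_AE: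
  assumes MX: "Metric_space X dX" and MU: "Metric_space U dU" and KU: "KE U dU"
    and ai: "almost_isometric X dX U dU"
  shows "approxE X dX"
  unfolding approxE_def
proof (intro allI impI; elim conjE)
  fix A r and e :: real assume k: "kat X dX A r" and e: "0 < e"
  have fA: "finite A" and rpos: "\<forall>a\<in>A. 0 < r a" and AX: "A \<subseteq> X" using k unfolding kat_def by auto
  define D where "D = (\<Sum>a\<in>A. \<Sum>b\<in>A. dX a b)"
  define R where "R = (\<Sum>a\<in>A. r a)"
  have D0: "D \<ge> 0" unfolding D_def by (intro sum_nonneg) (simp add: Metric_space.nonneg[OF MX])
  have Db: "\<forall>a\<in>A. \<forall>b\<in>A. dX a b \<le> D"
  proof (intro ballI)
    fix a b assume ab: "a \<in> A" "b \<in> A"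
    have "dX a b \<le> (\<Sum>b\<in>A. dX a b)"
      using fA ab by (intro member_le_sum) (auto simp: Metric_space.nonneg[OF MX])
    also have "\<dots> \<le> D" unfolding D_def using fA ab
      by (intro member_le_sum[where f="\<lambda>a. \<Sum>b\<in>A. dX a b"]) (auto intro: sum_nonneg simp: Metric_space.nonneg[OF MX])
    finally show "dX a b \<le> D" .
  qed
  have R0: "R \<ge> 0" unfolding R_def using rpos by (intro sum_nonneg) (auto simp: less_imp_le)
  have Rb: "\<forall>a\<in>A. r a \<le> R" unfolding R_def using fA rpos
    by (auto intro!: member_le_sum simp: less_imp_le)
  define s where "s = e / (D + R + 1)"
  have s0: "s > 0" unfolding s_def using e D0 R0 by simp
  define L where "L = sqrt (1 + s)"
  have L1: "L > 1" unfolding L_def using s0 by simp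
  have L2: "L^2 = 1 + s" unfolding L_def using s0 by simp
  obtain f where f: "bij_betw f X U" "bi_lipschitz L f X dX dU" using ai L1 unfolding almost_isometric_def by blast
  obtain y where y: "y \<in> X" "\<forall>b\<in>A. \<bar>dX y b - r b\<bar> \<le> (L^2 - 1) * (D + R)"
    using approx_step[OF MX MU KU f L1 k D0 Db R0 Rb] by blast
  have "(L^2 - 1) * (D + R) = e * (D + R) / (D + R + 1)" unfolding L2 s_def by simp
  also have "\<dots> \<le> e" using e D0 R0 by (simp add: divide_le_eq)
  finally show "\<exists>y\<in>X. \<forall>a\<in>A. \<bar>dX y a - r a\<bar> \<le> e" using y by force
qed

lemma dist_diff:
  assumes MX: "Metric_space X dX" and "z \<in> X" "w \<in> X" "a \<in> X"
  shows "\<bar>dX z a - dX w a\<bar> \<le> dX z w"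
proof -
  have "dX z a \<le> dX z w + dX w a" "dX w a \<le> dX w z + dX z a"
    using Metric_space.triangle[OF MX] assms by blast+
  moreover have "dX w z = dX z w" using Metric_space.commute[OF MX] by blast
  ultimately show ?thesis by linarith
qed

lemma X_KE:
  assumes MX: "Metric_space X dX" and cX: "fcomplete X dX" and ae: "approxE X dX"
  shows "KE X dX"
  unfolding KE_def
proof (intro allI impI)
  fix A r assume k: "kat X dX A r"
  have fA: "finite A" and AX: "A \<subseteq> X" and rpos: "\<forall>a\<in>A. 0 < r a"
    and rk: "\<forall>a\<in>A. \<forall>b\<in>A. r a \<le> r b + dX a b \<and> dX a b \<le> r a + r b"
    using k unfolding kat_def by auto
  show "\<exists>y\<in>X. \<forall>a\<in>A. dX y a = r a"
  proof (cases "A = {}")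
    case True
    have "kat X dX {} r" unfolding kat_def by simp
    then obtain y where "y \<in> X" using ae unfolding approxE_def by (meson zero_less_one)
    then show ?thesis using True by blast
  next
    case False
    define m where "m = Min (r ` A)"
    have m0: "m > 0" unfolding m_def using fA False rpos by simp
    have mle: "\<And>a. a \<in> A \<Longrightarrow> m \<le> r a" unfolding m_def using fA by simp
    define e where "e n = m / 2 * (1/2)^n" for n :: nat
    have e0: "e n > 0" for n unfolding e_def using m0 by simp
    have em: "e n < m" for n
    proof -
      have "(1/2::real)^n \<le> 1" by (simp add: power_le_one)
      then have "e n \<le> m / 2" unfolding e_def using m0 by (simp add: mult_left_le)
      then show ?thesis using m0 by linarith
    qed
    have eS: "e (Suc n) = e n / 2" for n unfolding e_def by simp
    define Q where "Q n z \<longleftrightarrow> z \<in> X \<and> (\<forall>a\<in>A. \<bar>dX z a - r a\<bar> \<le> e n)" for n z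
    have stepQ: "\<exists>z'. Q (Suc n) z' \<and> dX z' z \<le> e n + e (Suc n)" if Qz: "Q n z" for n z
    proof -
      have zX: "z \<in> X" and zA: "\<forall>a\<in>A. \<bar>dX z a - r a\<bar> \<le> e n" using Qz unfolding Q_def by auto
      have znA: "z \<notin> A"
      proof
        assume "z \<in> A"
        then have "\<bar>dX z z - r z\<bar> \<le> e n" "r z \<ge> m" using zA mle by auto
        moreover have "dX z z = 0" using Metric_space.zero[OF MX] zX by simp
        ultimately show False using em[of n] by linarith
      qed
      define r' where "r' = r(z := e n)"
      have cm: "\<And>x y. dX x y = dX y x" using Metric_space.commute[OF MX] by blast
      have zz: "dX z z = 0" using Metric_space.zero[OF MX] zX by simp
      have zrel: "r c - e n \<le> dX z c \<and> dX z c \<le> r c + e n \<and> e n \<le> r c" if "c \<in> A" for c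
        using zA that mle[OF that] em[of n] by (auto simp: abs_le_iff)
      have pos: "0 < r' a" if "a \<in> insert z A" for a
        using that unfolding r'_def using rpos e0 by auto
      have pair: "r' a \<le> r' b + dX a b \<and> dX a b \<le> r' a + r' b" if a: "a \<in> insert z A" and b: "b \<in> insert z A" for a b
        using a b
      proof (elim insertE)
        assume "a = z" "b = z" then show ?thesis using zz e0[of n] unfolding r'_def by simp
      next
        assume "a = z" "b \<in> A" then show ?thesis using zrel[of b] znA e0[of n] unfolding r'_def
          by (auto simp: cm)
      next
        assume "a \<in> A" "b = z" then show ?thesis using zrel[of a] znA e0[of n] unfolding r'_def
          by (auto simp: cm)
      next
        assume "a \<in> A" "b \<in> A" then show ?thesis using rk znA unfolding r'_def by (auto)
      qed
      have k': "kat X dX (insert z A) r'"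
        unfolding kat_def using fA AX zX pos pair by auto
      obtain z' where z': "z' \<in> X" "\<forall>a\<in>insert z A. \<bar>dX z' a - r' a\<bar> \<le> e (Suc n)"
        using ae k' e0[of "Suc n"] unfolding approxE_def by blast
      have "\<forall>a\<in>A. \<bar>dX z' a - r a\<bar> \<le> e (Suc n)"
      proof
        fix a assume aA: "a \<in> A"
        then have "a \<noteq> z" using znA by blast
        then show "\<bar>dX z' a - r a\<bar> \<le> e (Suc n)" using z'(2) aA unfolding r'_def by auto
      qed
      then have "Q (Suc n) z'" unfolding Q_def using z'(1) by blast
      moreover have "dX z' z \<le> e n + e (Suc n)" using z'(2) unfolding r'_def by (auto simp: abs_le_iff)
      ultimately show ?thesis by blast
    qed
    obtain y0 where y0: "Q 0 y0"
      using ae k e0[of 0] unfolding approxE_def Q_def by blast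
    define nxt where "nxt n z = (SOME z'. Q (Suc n) z' \<and> dX z' z \<le> e n + e (Suc n))" for n z
    define ys where "ys = rec_nat y0 nxt"
    have ys0: "ys 0 = y0" and ysS: "\<And>n. ys (Suc n) = nxt n (ys n)" by (simp_all add: ys_def)
    have Qn: "Q n (ys n) \<and> dX (ys (Suc n)) (ys n) \<le> e n + e (Suc n)" for n
    proof (induction n)
      case 0
      then show ?case unfolding ysS ys0 nxt_def using someI_ex[OF stepQ[OF y0]] y0 by blast
    next
      case (Suc n)
      then have q0: "Q n (ys n)" by blast
      have "Q (Suc n) (nxt n (ys n)) \<and> dX (nxt n (ys n)) (ys n) \<le> e n + e (Suc n)"
        unfolding nxt_def by (rule someI_ex[OF stepQ[OF q0]])
      then have q: "Q (Suc n) (ys (Suc n))" unfolding ysS by blast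
      have "Q (Suc (Suc n)) (nxt (Suc n) (ys (Suc n))) \<and> dX (nxt (Suc n) (ys (Suc n))) (ys (Suc n)) \<le> e (Suc n) + e (Suc (Suc n))"
        unfolding nxt_def by (rule someI_ex[OF stepQ[OF q]])
      then show ?case using q unfolding ysS[of "Suc n"] by blast
    qed
    have ysX: "\<forall>n. ys n \<in> X" using Qn unfolding Q_def by blast
    have "\<forall>n. dX (ys n) (ys (Suc n)) \<le> m * (1/2)^n"
    proof
      fix n
      have "dX (ys n) (ys (Suc n)) \<le> e n + e (Suc n)" using Qn[of n] Metric_space.commute[OF MX] by metis
      also have "\<dots> \<le> m * (1/2)^n" unfolding e_def using m0 by simp
      finally show "dX (ys n) (ys (Suc n)) \<le> m * (1/2)^n" .
    qed
    then obtain z where z: "z \<in> X" "\<forall>e>0. \<exists>N. \<forall>n\<ge>N. dX (ys n) z < e"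
      using cX ysX unfolding fcomplete_def by blast
    have "dX z a = r a" if a: "a \<in> A" for a
    proof -
      have "\<bar>dX z a - r a\<bar> < \<epsilon>" if eps: "\<epsilon> > 0" for \<epsilon>
      proof -
        obtain N where N: "\<forall>n\<ge>N. dX (ys n) z < \<epsilon>/2" using z(2) eps by (meson half_gt_zero)
        have "\<epsilon> / m > 0" using eps m0 by simp
        then obtain n1 where n1: "(1/2::real)^n1 < \<epsilon> / m" using real_arch_pow_inv[of "\<epsilon>/m" "1/2"] by auto
        define n where "n = max n1 N"
        have "(1/2::real)^n \<le> (1/2)^n1" unfolding n_def by (simp add: power_decreasing)
        then have "m * (1/2::real)^n \<le> m * (1/2)^n1" using m0 by (intro mult_left_mono) auto
        moreover have "m * (1/2::real)^n1 < \<epsilon>" using n1 m0 by (simp add: pos_less_divide_eq mult.commute)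
        ultimately have "m * (1/2::real)^n < \<epsilon>" by linarith
        then have en: "e n < \<epsilon>/2" unfolding e_def by simp
        have d1: "dX (ys n) z < \<epsilon>/2" using N unfolding n_def by simp
        have "\<bar>dX z a - dX (ys n) a\<bar> \<le> dX z (ys n)" using dist_diff[OF MX z(1) _ ] ysX AX a by blast
        moreover have "dX z (ys n) = dX (ys n) z" using Metric_space.commute[OF MX] by blast
        moreover have "\<bar>dX (ys n) a - r a\<bar> \<le> e n" using Qn[of n] a unfolding Q_def by blast
        ultimately show ?thesis using d1 en by linarith
      qed
      then show ?thesis using eps0[of "dX z a - r a"] by simp
    qed
    then show ?thesis using z(1) by blast
  qed
qed

theorem theorem3p8:
  fixes U :: "'a set" and dU :: "'a \<Rightarrow> 'a \<Rightarrow> real"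
    and X :: "'b set" and dX :: "'b \<Rightarrow> 'b \<Rightarrow> real"
  assumes "Urysohn_space U dU"
    and "Metric_space X dX"
    and "almost_isometric X dX U dU"
  shows "isometric X dX U dU"
proof -
  have MU: "Metric_space U dU" and mc: "Metric_space.mcomplete U dU"
    and sep: "separable_space (Metric_space.mtopology U dU)"
    using assms(1) unfolding Urysohn_space_def by auto
  have KU: "KE U dU" using urysohn_KE[OF assms(1)] .
  have cU: "fcomplete U dU" using mcomplete_fcomplete[OF MU mc] .
  have "kat U dU {} (\<lambda>_. 0)" unfolding kat_def by simp
  then obtain u0 where u0: "u0 \<in> U" using KU unfolding KE_def by blast
  obtain us where us: "dseq U dU us" using sep_dseq[OF MU sep u0] by blast
  obtain f where f: "bij_betw f X U" "bi_lipschitz 2 f X dX dU"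
    using assms(3) unfolding almost_isometric_def by (meson one_less_numeral_iff semiring_norm(76))
  have cX: "fcomplete X dX" using X_fcomplete[OF assms(2) MU cU f] by simp
  have dX: "dseq X dX (inv_into X f \<circ> us)" using X_dseq[OF assms(2) MU us f] by simp
  have KX: "KE X dX" using X_KE[OF assms(2) cX X_AE[OF assms(2) MU KU assms(3)]] .
  show ?thesis using uniq[OF assms(2) MU cX cU KX KU dX us] .
qed

end
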